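(* (i) We have $$\sum_{k=0}^\infty\frac{(49k+1)8^k}{3^k\binom{3k}k}=81+16\sqrt3\,\pi.$$ (ii) Let $c=\frac32\left((1+\sqrt2)^{1/3}-(1+\sqrt2)^{-1/3}\right)$, so $1/c=1.11843\cdots$. If $n$ is a real number with $n<-1/3$ or $n>1/c$, then $$\sum_{k=0}^\infty\frac{a_nk-b_n}{((1-n)n^2)^k\binom{3k}k}=3n^2(n-1)\left(4\log\left(1-\frac1n\right)-9(3n^2-6n+1)\right),$$ where $$a_n=(3n+1)(3n-2)^2(9n^2-12n+1),\qquad b_n=81n^5-243n^4+189n^3-69n^2+48n-2.$$ In particular, \begin{align*} \sum_{k=0}^\infty\frac{275k-158}{2^k\binom{3k}k}&=6\log2-135,\\ \sum_{k=0}^\infty\frac{728k-17}{(-4)^k\binom{3k}k}&=-54-24\log2,\\ \sum_{k=0}^\infty\frac{(1813k-2707)8^k}{3^k\binom{3k}k}&=9(16\log3-171),\\ \sum_{k=0}^\infty\frac{5635k-1156}{(-18)^k\binom{3k}k}&=54\log\frac23-1215,\\ \sum_{k=0}^\infty\frac{63050k-15959}{(-48)^k\binom{3k}k}&=72\left(4\log\frac34-225\right),\\ \sum_{k=0}^\infty\frac{112216k-30847}{(-100)^k\binom{3k}k}&=300\log\frac45-31050,\\ \sum_{k=0}^\infty\frac{615296k-176777}{(-180)^k\binom{3k}k}&=270\left(4\log\frac56-657\right),\\ \sum_{k=0}^\infty\frac{710809k-209926}{(-294)^k\binom{3k}k}&=441\left(2\log\frac67-477\right),\\ \sum_{k=0}^\infty\frac{2910050k-875807}{(-448)^k\binom{3k}k}&=672\left(4\log\frac78-1305\right),\\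 \sum_{k=0}^\infty\frac{2721250k-830317}{(-648)^k\binom{3k}k}&=972\left(2\log\frac89-855\right),\\ \sum_{k=0}^\infty\frac{9490712k-2926289}{(-900)^k\binom{3k}k}&=1350\left(4\log\frac9{10}-2169\right),\\ \sum_{k=0}^\infty\frac{7825423k-2432776}{(-1210)^k\binom{3k}k}&=1815\left(2\log\frac{10}{11}-1341\right). \end{align*}
   Context: $\log$ is the natural logarithm. *)

theory Defs
  imports Complex_Main
begin

definition cconst :: real where
  "cconst = 3/2 * ((1 + sqrt 2) powr (1/3) - (1 + sqrt 2) powr (-1/3))"

definition a_coef :: "real \<Rightarrow> real" where
  "a_coef n = (3*n + 1) * (3*n - 2)^2 * (9*n^2 - 12*n + 1)"

definition b_coef :: "real \<Rightarrow> real" where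
  "b_coef n = 81*n^5 - 243*n^4 + 189*n^3 - 69*n^2 + 48*n - 2"

end

theory Submission
  imports Defs "HOL-Analysis.Analysis"
begin


lemma beta_int:
  "((\<lambda>t::real. t^k * (1-t)^(2*k)) has_integral 1/((3*real k+1) * real((3*k) choose k))) {0..1}"
proof -
  have h: "((\<lambda>t. t powr (real (k+1) - 1) * (1 - t) powr (real (2*k+1) - 1)) has_integral Beta (real (k+1)) (real (2*k+1))) {0..1}"
    by (rule has_integral_Beta_real) auto
  have B: "Beta (real (k+1)) (real (2*k+1)) = 1/((3*real k+1) * real((3*k) choose k))"
  proof -
    have g1: "Gamma (real (k+1)) = fact k" using Gamma_fact[of k] by (simp add: add.commute)
    have g2: "Gamma (real (2*k+1)) = fact (2*k)" using Gamma_fact[of "2*k"] by (simp add: add.commute)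
    have g3: "Gamma (real (k+1) + real (2*k+1)) = fact (3*k+1)" using Gamma_fact[of "3*k+1"] by (simp add: add.commute)
    have c: "real((3*k) choose k) = fact (3*k) / (fact k * fact (2*k))"
      using binomial_fact[of k "3*k", where 'a=real] by simp
    have f: "(fact (3*k+1)::real) = (3*real k+1) * fact (3*k)"
      by (simp add: fact_Suc)
    show ?thesis unfolding Beta_def g1 g2 g3 c f by (simp add: field_simps)
  qed
  have "((\<lambda>t. t powr (real (k+1) - 1) * (1 - t) powr (real (2*k+1) - 1)) has_integral Beta (real (k+1)) (real (2*k+1))) {0<..<1}"
    using h by (simp add: has_integral_Icc_iff_Ioo)
  then have "((\<lambda>t::real. t^k * (1-t)^(2*k)) has_integral Beta (real (k+1)) (real (2*k+1))) {0<..<1}"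
  proof (rule has_integral_cong[THEN iffD1, rotated])
    fix x :: real assume "x \<in> {0<..<1}"
    then have "(1-x) powr (real (2*k)) = (1-x)^(2*k)" by (intro powr_realpow) simp
    moreover have "x powr (real k) = x^k" using \<open>x \<in> {0<..<1}\<close> by (intro powr_realpow) simp
    ultimately show "x powr (real (k+1) - 1) * (1 - x) powr (real (2*k+1) - 1) = x^k * (1-x)^(2*k)" by simp
  qed
  then show ?thesis using B by (simp add: has_integral_Icc_iff_Ioo)
qed

lemma npow_lim:
  fixes u :: real assumes "\<bar>u\<bar> < 1"
  shows "(\<lambda>N. real N ^ 2 * u ^ N) \<longlonglongrightarrow> 0"
proof -
  define s where "s = sqrt \<bar>u\<bar>"
  have s: "\<bar>s\<bar> < 1" "s \<ge> 0" using assms by (auto simp: s_def real_sqrt_lt_1_iff)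
  have "(\<lambda>N. (real N * s ^ N) * (real N * s ^ N)) \<longlonglongrightarrow> 0 * 0"
    by (intro tendsto_mult powser_times_n_limit_0) (use s in auto)
  moreover have "(\<lambda>N. (real N * s ^ N) * (real N * s ^ N)) = (\<lambda>N. \<bar>real N ^ 2 * u ^ N\<bar>)"
  proof
    fix N
    have "s^2 = \<bar>u\<bar>" using s_def by simp
    then have "(s^N)^2 = \<bar>u\<bar>^N" by (metis power_mult power_mult_distrib mult.commute power_even_eq)
    then show "real N * s ^ N * (real N * s ^ N) = \<bar>real N ^ 2 * u ^ N\<bar>"
      by (simp add: abs_mult power_abs power2_eq_square algebra_simps)
  qed
  ultimately show ?thesis by (simp add: tendsto_rabs_zero_iff)
qed

definition gam :: "real \<Rightarrow> real \<Rightarrow> real \<Rightarrow> real" where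
  "gam A B u = A * u * (4 + 2*u) / (1-u)^3 + B * (1 + 2*u) / (1-u)^2"

lemma ser_sums:
  fixes u A B :: real assumes "\<bar>u\<bar> < 1"
  shows "(\<lambda>k. (A * real k + B) * (3 * real k + 1) * u^k) sums gam A B u"
proof -
  have u1: "1 - u \<noteq> 0" using assms by auto
  define c where "c = 1/(1-u)^3"
  have c3: "c * (1-u)^3 = 1" using u1 by (simp add: c_def)
  define Gn where "Gn = (\<lambda>r::real. 3*A*(1-u)^2 * r^2 + ((A+3*B)*(1-u) + 6*A*u)*(1-u)*r + (A*u*(4+2*u) + B*(1+2*u)*(1-u)))"
  have pid: "Gn r - u * Gn (r+1) = (1-u)^3 * ((A*r+B)*(3*r+1))" for r
    unfolding Gn_def by algebra
  have e: "B*(1+2*u)/(1-u)^2 = B*(1+2*u)*(1-u)/(1-u)^3" using u1 by (simp add: power2_eq_square power3_eq_cube)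
  have gG: "gam A B u = c * Gn 0" unfolding gam_def e Gn_def c_def by (simp add: add_divide_distrib)
  define G where "G = (\<lambda>N::nat. c * Gn (real N))"
  have ps: "(\<Sum>k<N. (A * real k + B) * (3 * real k + 1) * u^k) = gam A B u - G N * u ^ N" for N
  proof (induction N)
    case 0 then show ?case by (simp add: G_def gG)
  next
    case (Suc N)
    have "G N * u^N - G (Suc N) * u ^ Suc N = c * (Gn (real N) - u * Gn (real N + 1)) * u^N"
      unfolding G_def by (simp add: algebra_simps)
    also have "\<dots> = (c * (1-u)^3) * ((A * real N + B) * (3 * real N + 1)) * u^N"
      unfolding pid by (simp only: ac_simps)
    also have "\<dots> = (A * real N + B) * (3 * real N + 1) * u^N"
      using c3 by simp
    finally have "G N * u^N - G (Suc N) * u ^ Suc N = (A * real N + B) * (3 * real N + 1) * u^N" .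
    then show ?case using Suc by simp
  qed
  define al where "al = c * 3*A*(1-u)^2"
  define be where "be = c * ((A+3*B)*(1-u) + 6*A*u)*(1-u)"
  have "(\<lambda>N. G N * u ^ N) \<longlonglongrightarrow> al * 0 + be * 0 + gam A B u * 0"
  proof -
    have "(\<lambda>N. al * (real N ^ 2 * u ^ N) + be * (real N * u^N) + gam A B u * u^N) \<longlonglongrightarrow> al * 0 + be * 0 + gam A B u * 0"
      by (intro tendsto_intros npow_lim assms powser_times_n_limit_0 LIMSEQ_power_zero) (use assms in auto)
    moreover have "(\<lambda>N. al * (real N ^ 2 * u ^ N) + be * (real N * u^N) + gam A B u * u^N) = (\<lambda>N. G N * u ^ N)"
      by (rule ext) (simp add: G_def gG Gn_def al_def be_def algebra_simps)
    ultimately show ?thesis by simp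
  qed
  then have "(\<lambda>N. gam A B u - G N * u ^ N) \<longlonglongrightarrow> gam A B u - 0"
    by (intro tendsto_intros) simp
  then show ?thesis unfolding sums_def ps by simp
qed

lemma T_bound: "t \<in> {0..1} \<Longrightarrow> 0 \<le> t*(1-t)^2 \<and> t*(1-t)^2 \<le> (4/27::real)"
proof -
  assume t: "t \<in> {0..1}"
  have "4/27 - t*(1-t)^2 = (1-3*t)^2*(4-3*t)/27" by (simp add: algebra_simps power2_eq_square)
  moreover have "(1-3*t)^2*(4-3*t) \<ge> 0" using t by (intro mult_nonneg_nonneg) auto
  moreover have "t*(1-t)^2 \<ge> 0" using t by simp
  ultimately show ?thesis by linarith
qed

lemma main_sum:
  fixes A B x :: real and F :: "real \<Rightarrow> real"
  assumes x: "\<bar>x\<bar> * 4/27 < 1"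
  and deriv: "\<And>t. t \<in> {0..1} \<Longrightarrow> (F has_real_derivative gam A B (x * (t*(1-t)^2))) (at t within {0..1})"
  shows "(\<lambda>k. (A * real k + B) * x^k / real((3*k) choose k)) sums (F 1 - F 0)"
proof -
  define r where "r = \<bar>x\<bar> * 4/27"
  have r: "0 \<le> r" "r < 1" using x by (auto simp: r_def)
  have ub: "\<bar>x*(t*(1-t)^2)\<bar> \<le> r" if "t \<in> {0..1}" for t
  proof -
    have "\<bar>x*(t*(1-t)^2)\<bar> = \<bar>x\<bar> * (t*(1-t)^2)" using T_bound[OF that] that by (simp add: abs_mult)
    also have "\<dots> \<le> \<bar>x\<bar> * (4/27)" using T_bound[OF that] by (intro mult_left_mono) auto
    finally show ?thesis by (simp add: r_def)
  qed
  define f where "f = (\<lambda>k t. (A * real k + B) * (3 * real k + 1) * (x*(t*(1-t)^2))^k)"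
  define M where "M = (\<lambda>k. (\<bar>A\<bar> * real k + \<bar>B\<bar>) * (3 * real k + 1) * r^k)"
  have sM: "summable M" unfolding M_def
    using ser_sums[of r "\<bar>A\<bar>" "\<bar>B\<bar>"] r by (auto intro: sums_summable)
  have bnd: "norm (f k t) \<le> M k" if "t \<in> {0..1}" for k t
  proof -
    have "norm (f k t) = \<bar>A * real k + B\<bar> * (3 * real k + 1) * \<bar>x*(t*(1-t)^2)\<bar>^k"
      by (simp add: f_def abs_mult power_abs)
    also have "\<dots> \<le> (\<bar>A\<bar> * real k + \<bar>B\<bar>) * (3 * real k + 1) * r^k"
    proof (intro mult_mono power_mono ub that)
      show "\<bar>A * real k + B\<bar> \<le> \<bar>A\<bar> * real k + \<bar>B\<bar>"
        by (metis abs_mult abs_of_nat abs_triangle_ineq)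
    qed (use r in auto)
    finally show ?thesis by (simp add: M_def)
  qed
  have unif: "uniform_limit {0..1} (\<lambda>N t. \<Sum>k<N. f k t) (\<lambda>t. suminf (\<lambda>k. f k t)) sequentially"
    by (rule Weierstrass_m_test[OF bnd sM])
  have cont: "continuous_on {0..1} (\<lambda>t. \<Sum>k<N. f k t)" for N
    unfolding f_def by (intro continuous_intros)
  obtain I J where I: "\<And>N. ((\<lambda>t. \<Sum>k<N. f k t) has_integral I N) {0..1}"
    and J: "((\<lambda>t. suminf (\<lambda>k. f k t)) has_integral J) {0..1}" and IJ: "I \<longlonglongrightarrow> J"
    using uniform_limit_integral[OF unif cont] by auto
  have fk: "(f k has_integral (A * real k + B) * x^k / real((3*k) choose k)) {0..1}" for k
  proof -
    have "((\<lambda>t. ((A * real k + B) * (3 * real k + 1) * x^k) * (t^k * (1-t)^(2*k))) has_integral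
        ((A * real k + B) * (3 * real k + 1) * x^k) * (1/((3*real k+1) * real((3*k) choose k)))) {0..1}"
      by (intro has_integral_mult_right beta_int)
    moreover have "((A * real k + B) * (3 * real k + 1) * x^k) * (1/((3*real k+1) * real((3*k) choose k)))
        = (A * real k + B) * x^k / real((3*k) choose k)"
    proof -
      have *: "a \<noteq> 0 \<Longrightarrow> b \<noteq> 0 \<Longrightarrow> (P*a*y)*(1/(a*b)) = P*y/b" for a b P y :: real
        by (simp add: field_simps)
      have "real((3*k) choose k) \<noteq> 0" "3 * real k + 1 \<noteq> 0" by auto
      from *[OF this(2,1)] show ?thesis .
    qed
    moreover have "(\<lambda>t. ((A * real k + B) * (3 * real k + 1) * x^k) * (t^k * (1-t)^(2*k))) = f k"
      by (rule ext) (simp add: f_def power_mult_distrib power_mult power2_eq_square mult_ac)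
    ultimately show ?thesis by simp
  qed
  have IN: "I N = (\<Sum>k<N. (A * real k + B) * x^k / real((3*k) choose k))" for N
  proof -
    have "((\<lambda>t. \<Sum>k<N. f k t) has_integral (\<Sum>k<N. (A * real k + B) * x^k / real((3*k) choose k))) {0..1}"
      by (intro has_integral_sum fk) auto
    then show ?thesis using I[of N] by (rule has_integral_unique[symmetric])
  qed
  have suf: "suminf (\<lambda>k. f k t) = gam A B (x * (t*(1-t)^2))" if "t \<in> {0..1}" for t
    unfolding f_def using ser_sums[of "x * (t*(1-t)^2)" A B] ub[OF that] r by (auto intro: sums_unique[symmetric])
  have "((\<lambda>t. gam A B (x * (t*(1-t)^2))) has_integral (F 1 - F 0)) {0..1}"
    by (rule fundamental_theorem_of_calculus) (auto simp: has_real_derivative_iff_has_vector_derivative[symmetric] intro: deriv)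
  then have "((\<lambda>t. suminf (\<lambda>k. f k t)) has_integral (F 1 - F 0)) {0..1}"
    by (rule has_integral_cong[THEN iffD1, rotated]) (simp add: suf)
  then have "J = F 1 - F 0" using J by (rule has_integral_unique[symmetric])
  then show ?thesis using IJ unfolding sums_def IN[symmetric] by simp
qed



definition "WW n = (1-n)*(n::real)^2"
definition "TT (t::real) = t*(1-t)^2"
definition "DD n t = WW n - TT t"
definition "DD' (t::real) = -(1-t)*(1-3*t)"
definition "QQ n t = t^2 - (1+n)*t + (n::real)^2"
definition "QQ' n t = 2*t - (1+(n::real))"
definition "pc0 n = -18*n^6 + 162*n^7 - 432*n^8 + 504*n^9 - 270*n^10 + 54*(n::real)^11"
definition "pc1 n = 34*n^4 - 332*n^5 + 751*n^6 - 831*n^7 + 810*n^8 - 756*n^9 + 405*n^10 - 81*(n::real)^11"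
definition "pc2 n = -4*n^2 + 16*n^3 - 136*n^4 + 1322*n^5 - 2974*n^6 + 2478*n^7 - 702*(n::real)^8"
definition "pc3 n = 12*n^2 - 48*n^3 + 180*n^4 - 1584*n^5 + 3600*n^6 - 3024*n^7 + 864*(n::real)^8"
definition "pc4 n = -12*n^2 + 48*n^3 - 90*n^4 + 594*n^5 - 1350*n^6 + 1134*n^7 - 324*(n::real)^8"
definition "pc5 n = 4*n^2 - 16*n^3 + 12*(n::real)^4"
definition "PP n t = pc0 n + pc1 n*t + pc2 n*t^2 + pc3 n*t^3 + pc4 n*t^4 + pc5 n*(t::real)^5"
definition "PP' n t = pc1 n + 2*pc2 n*t + 3*pc3 n*t^2 + 4*pc4 n*t^3 + 5*pc5 n*(t::real)^4"
definition "FF n t = PP n t/(DD n t)^2 + 4*WW n*(ln((t-(1-n))^2) - ln(QQ n t))"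

lemma key_poly:
  "PP' n t*DD n t - 2*PP n t*DD' t - (DD n t)^2*(8*WW n*QQ n t - 4*WW n*(t-(1-n))*QQ' n t)
   = WW n*(a_coef n*TT t*(4*WW n+2*TT t) - b_coef n*(WW n+2*TT t)*DD n t)"
  unfolding a_coef_def b_coef_def WW_def TT_def DD_def DD'_def QQ_def QQ'_def PP_def PP'_def
    pc0_def pc1_def pc2_def pc3_def pc4_def pc5_def by algebra

lemma key_end: "PP n 1 - PP n 0 = 27 * (WW n)^3 * (3*n^2-6*n+1)"
proof -
  have "PP n 1 - PP n 0 = pc1 n + pc2 n + pc3 n + pc4 n + pc5 n" by (simp add: PP_def)
  also have "\<dots> = 27 * (WW n)^3 * (3*n^2-6*n+1)"
    unfolding WW_def pc1_def pc2_def pc3_def pc4_def pc5_def by algebra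
  finally show ?thesis .
qed

lemma DQ: "DD n t = -(t-(1-n)) * QQ n t"
  unfolding DD_def WW_def TT_def QQ_def by algebra

lemma combine:
  fixes P P' D D' Q Q' W T a b tm :: real
  assumes "D \<noteq> 0" "tm \<noteq> 0" "Q \<noteq> 0" "W \<noteq> 0" "D = W - T" "D = - tm * Q"
    "P'*D - 2*P*D' - D^2*(8*W*Q - 4*W*tm*Q') = W*(a*T*(4*W+2*T) - b*(W+2*T)*D)"
  shows "(P' * D^2 - P * (2*D*D'))/(D^2)^2 + 4*W*(2*tm/tm^2 - Q'/Q) = gam a (-b) ((1/W) * T)"
proof -
  have e1: "1 - (1/W)*T = D/W" using assms(4,5) by (simp add: field_simps)
  have "gam a (-b) ((1/W) * T) = W*(a*T*(4*W+2*T) - b*(W+2*T)*D) / D^3"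
    unfolding gam_def e1 using assms(1,4) by (simp add: field_simps power2_eq_square power3_eq_cube)
  also have "\<dots> = (P'*D - 2*P*D' - D^2*(8*W*Q - 4*W*tm*Q')) / D^3" using assms(7) by simp
  also have "\<dots> = (P' * D^2 - P * (2*D*D'))/(D^2)^2 + 4*W*(2*tm/tm^2 - Q'/Q)"
    using assms(1,2,3,6) by (simp add: field_simps power2_eq_square power3_eq_cube)
  finally show ?thesis by simp
qed

lemma FF_deriv:
  assumes "DD n t \<noteq> 0" "t - (1-n) \<noteq> 0" "QQ n t > 0"
  shows "(FF n has_real_derivative ((PP' n t * (DD n t)^2 - PP n t * (2*DD n t*DD' t))/((DD n t)^2)^2
     + 4*WW n*(2*(t-(1-n))/(t-(1-n))^2 - QQ' n t/QQ n t))) (at t)"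
proof -
  have dP: "(PP n has_real_derivative PP' n t) (at t)"
    unfolding PP_def PP'_def by (auto intro!: derivative_eq_intros simp: algebra_simps)
  have dD: "(DD n has_real_derivative DD' t) (at t)"
    unfolding DD_def DD'_def TT_def by (auto intro!: derivative_eq_intros simp: algebra_simps power2_eq_square)
  have dQ: "(QQ n has_real_derivative QQ' n t) (at t)"
    unfolding QQ_def QQ'_def by (auto intro!: derivative_eq_intros simp: algebra_simps)
  have h1: "((\<lambda>t. PP n t/(DD n t)^2) has_real_derivative (PP' n t * (DD n t)^2 - PP n t * (2*DD n t*DD' t))/((DD n t)^2)^2) (at t)"
    using DERIV_divide[OF dP DERIV_power[OF dD, of 2]] assms(1)
    by (simp add: power2_eq_square mult_ac)
  have h2: "((\<lambda>t. ln ((t-(1-n))^2)) has_real_derivative 2*(t-(1-n))/(t-(1-n))^2) (at t)"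
  proof -
    have pos: "(t-(1-n))^2 > 0" using assms(2) by simp
    have d2: "((\<lambda>t. (t-(1-n))^2) has_real_derivative 2*(t-(1-n))) (at t)"
      by (auto intro!: derivative_eq_intros)
    show ?thesis using DERIV_chain2[OF DERIV_ln_divide[OF pos] d2] by simp
  qed
  have h3: "((\<lambda>t. ln (QQ n t)) has_real_derivative QQ' n t/QQ n t) (at t)"
    using DERIV_chain2[OF DERIV_ln_divide[OF assms(3)] dQ] by simp
  show ?thesis unfolding FF_def
    by (rule DERIV_add[OF h1 DERIV_cmult[OF DERIV_diff[OF h2 h3]]])
qed

lemma cconst_facts: "0 < cconst \<and> cconst < 1 \<and> 4*cconst^3 + 27*cconst = 27"
proof -
  define s where "s = (1 + sqrt 2) powr (1/3)"
  have p: "1 + sqrt 2 > (1::real)" by simp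
  have p': "1 + sqrt 2 \<noteq> (0::real)" using p by linarith
  have s0: "s > 0" using p' by (simp add: s_def)
  have s3: "s^3 = 1 + sqrt 2"
  proof -
    have "s^3 = s powr (real 3)" using s0 by (simp add: powr_realpow)
    also have "\<dots> = 1 + sqrt 2" unfolding s_def using p by (simp add: powr_powr)
    finally show ?thesis .
  qed
  define v where "v = (1 + sqrt 2) powr (-1/3)"
  have sv: "s * v = 1"
  proof -
    have "v = (1 + sqrt 2) powr (-(1/3))" by (simp add: v_def)
    also have "\<dots> = inverse s" unfolding s_def by (rule powr_minus)
    finally show ?thesis using s0 by simp
  qed
  have v3: "s^3 - v^3 = 2"
  proof -
    have "(s * v) ^ 3 = 1" using sv by simp
    then have "(1 + sqrt 2) * v^3 = 1" using s3 by (simp add: power_mult_distrib)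
    moreover have "(1 + sqrt 2) * (sqrt 2 - 1) = 1" by (simp add: algebra_simps)
    ultimately have "v^3 = sqrt 2 - 1"
      by (metis mult_cancel_left p not_one_less_zero mult_zero_left)
    then show ?thesis using s3 by simp
  qed
  have c: "cconst = 3/2 * (s - v)" unfolding cconst_def s_def v_def by simp
  have cube: "(s - v)^3 = 2 - 3*(s - v)"
  proof -
    have "(s - v)^3 = (s^3 - v^3) - 3*(s * v)*(s - v)" by algebra
    then show ?thesis using sv v3 by simp
  qed
  have e1: "4*cconst^3 + 27*cconst = 27/2*(s-v)^3 + 81/2*(s-v)" unfolding c power_mult_distrib by (simp add: power3_eq_cube)
  have aux: "27/2*(2-3*w) + 81/2*w = (27::real)" for w by (simp add: field_simps)
  have eq: "4*cconst^3 + 27*cconst = 27" unfolding e1 cube by (rule aux)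
  have "s > 1"
  proof (rule ccontr)
    assume "\<not> s > 1"
    then have "s^3 \<le> 1^3" using s0 by (intro power_mono) auto
    then show False using s3 by simp
  qed
  moreover have "v = 1/s" using sv s0 by (simp add: field_simps)
  ultimately have "v < 1" by simp
  then have c0: "cconst > 0" using \<open>s > 1\<close> unfolding c by simp
  have c1: "cconst < 1"
  proof (rule ccontr)
    assume "\<not> cconst < 1"
    then have "cconst^3 \<ge> 1" by simp
    then show False using eq \<open>\<not> cconst < 1\<close> by linarith
  qed
  show ?thesis using c0 c1 eq by blast
qed

lemma W_big:
  assumes "n < -1/3 \<or> n > 1/cconst"
  shows "\<bar>WW n\<bar> > 4/27 \<and> (n < -1/3 \<or> n > 1)"
proof (cases "n < -1/3")
  case True
  have "WW n - 4/27 = -(n+1/3)*(n-2/3)^2" unfolding WW_def by (simp add: field_simps power2_eq_square)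
  moreover have "-(n+1/3)*(n-2/3)^2 > 0" using True by (intro mult_pos_pos) auto
  ultimately have "WW n > 4/27" by linarith
  then show ?thesis using True by auto
next
  case False
  then have n: "n > 1/cconst" using assms by auto
  have cf: "0 < cconst" "cconst < 1" "4*cconst^3 + 27*cconst = 27" using cconst_facts by auto
  have n1: "n > 1" using n cf by (smt (verit) less_divide_eq_1_pos)
  define y where "y = 1/n"
  have y: "0 < y" "y < cconst" using n n1 cf unfolding y_def
    by (auto simp: field_simps)
  have "y^3 < cconst^3" using y by (intro power_strict_mono) auto
  then have neg: "4*y^3 + 27*y - 27 < 0" using y cf by linarith
  have "n^3 - n^2 - 4/27 = - (n^3) * (4*y^3 + 27*y - 27)/27" unfolding y_def using n1
    by (simp add: field_simps power3_eq_cube power2_eq_square)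
  moreover have "- (n^3) * (4*y^3 + 27*y - 27)/27 > 0" 
  proof -
    have "0 < (-(n^3)) * (4*y^3 + 27*y - 27)" by (rule mult_neg_neg) (use n1 neg in auto)
    then show ?thesis by simp
  qed
  ultimately have "n^3 - n^2 > 4/27" by linarith
  moreover have "WW n = -(n^3 - n^2)" unfolding WW_def by (simp add: algebra_simps power2_eq_square power3_eq_cube)
  ultimately show ?thesis using n1 by auto
qed

lemma part2:
  fixes n :: real
  assumes n: "n < -1/3 \<or> n > 1 / cconst"
  shows "((\<lambda>k::nat. (a_coef n * real k - b_coef n) / (((1 - n) * n^2)^k * real ((3*k) choose k)))
          sums (3 * n^2 * (n - 1) * (4 * ln (1 - 1/n) - 9 * (3*n^2 - 6*n + 1))))"
proof -
  have Wb: "\<bar>WW n\<bar> > 4/27" and nn: "n < -1/3 \<or> n > 1" using W_big[OF n] by auto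
  have W0: "WW n \<noteq> 0" using Wb by auto
  have n0: "n \<noteq> 0" using nn by auto
  have x: "\<bar>1/WW n\<bar> * 4/27 < 1" using Wb W0 by (simp add: field_simps abs_divide)
  have deriv: "(FF n has_real_derivative gam (a_coef n) (-b_coef n) ((1/WW n) * (t*(1-t)^2))) (at t within {0..1})"
    if t: "t \<in> {0..1}" for t
  proof -
    have Tb: "0 \<le> TT t \<and> TT t \<le> 4/27" using T_bound[OF t] by (simp add: TT_def)
    have D0: "DD n t \<noteq> 0" unfolding DD_def using Tb Wb by auto
    have tm: "t - (1-n) \<noteq> 0" using nn t by auto
    have Qp: "QQ n t > 0"
    proof -
      have "4 * QQ n t = (2*t - (1+n))^2 + (n-1)*(3*n+1)" unfolding QQ_def by (simp add: algebra_simps power2_eq_square)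
      moreover have "(n-1)*(3*n+1) > 0" using nn
        by (auto intro: mult_pos_pos mult_neg_neg)
      moreover have "(2*t - (1+n))^2 \<ge> 0" by simp
      ultimately show ?thesis by linarith
    qed
    have "(FF n has_real_derivative ((PP' n t * (DD n t)^2 - PP n t * (2*DD n t*DD' t))/((DD n t)^2)^2
       + 4*WW n*(2*(t-(1-n))/(t-(1-n))^2 - QQ' n t/QQ n t))) (at t)"
      by (rule FF_deriv[OF D0 tm Qp])
    moreover have "(PP' n t * (DD n t)^2 - PP n t * (2*DD n t*DD' t))/((DD n t)^2)^2
       + 4*WW n*(2*(t-(1-n))/(t-(1-n))^2 - QQ' n t/QQ n t) = gam (a_coef n) (-b_coef n) ((1/WW n) * TT t)"
      by (rule combine[OF D0 tm _ W0 _ DQ key_poly]) (use Qp in \<open>auto simp: DD_def\<close>)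
    ultimately show ?thesis by (simp add: TT_def has_field_derivative_at_within)
  qed
  have S: "(\<lambda>k. (a_coef n * real k + (-b_coef n)) * (1/WW n)^k / real((3*k) choose k)) sums (FF n 1 - FF n 0)"
    by (rule main_sum[OF x deriv])
  have fe: "(\<lambda>k. (a_coef n * real k + (-b_coef n)) * (1/WW n)^k / real((3*k) choose k))
      = (\<lambda>k::nat. (a_coef n * real k - b_coef n) / (((1 - n) * n^2)^k * real ((3*k) choose k)))"
    by (rule ext) (simp add: WW_def power_one_over)
  define L where "L = 1 - 1/n"
  have L0: "L > 0" using nn unfolding L_def
  proof
    assume "n < -1/3" then have "1/n < 0" by (simp add: divide_less_0_iff)
    then show "0 < 1 - 1/n" by linarith
  next
    assume "n > 1" then have "1/n < 1" by simp
    then show "0 < 1 - 1/n" by linarith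
  qed
  have q1: "QQ n 1 = n^2 * L" unfolding QQ_def L_def using n0 by (simp add: field_simps power2_eq_square)
  have q0: "QQ n 0 = n^2" unfolding QQ_def by simp
  have m0: "(0 - (1-n))^2 = n^2 * L^2" unfolding L_def using n0 by (simp add: field_simps power2_eq_square)
  have d1: "DD n 1 = WW n" "DD n 0 = WW n" unfolding DD_def TT_def by simp_all
  have n2: "n^2 > 0" using n0 by simp
  have "FF n 1 - FF n 0 = (PP n 1 - PP n 0)/(WW n)^2 + 4*WW n*((ln (n^2) - ln (n^2 * L)) - (ln (n^2 * L^2) - ln (n^2)))"
    unfolding FF_def d1 q1 q0 m0 by (simp add: diff_divide_distrib algebra_simps)
  also have "\<dots> = 27 * WW n * (3*n^2-6*n+1) - 12 * WW n * ln L"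
  proof -
    have l1: "ln (n^2 * L) = ln (n^2) + ln L" using n2 L0 by (simp add: ln_mult)
    have l2: "ln (n^2 * L^2) = ln (n^2) + 2 * ln L" using n2 L0 by (simp add: ln_mult ln_realpow)
    have k: "(PP n 1 - PP n 0)/(WW n)^2 = 27 * WW n * (3*n^2-6*n+1)"
      unfolding key_end using W0 by (simp add: power2_eq_square power3_eq_cube)
    show ?thesis unfolding l1 l2 k by (simp add: algebra_simps)
  qed
  also have "\<dots> = 3 * n^2 * (n - 1) * (4 * ln (1 - 1/n) - 9 * (3*n^2 - 6*n + 1))"
    unfolding L_def WW_def by (simp add: algebra_simps)
  finally show ?thesis using S fe by simp
qed

definition "P1 (t::real) = -243/32 + 1737/64*t - 159/4*t^2 + 72*t^3 - 72*t^4 + 24*t^5"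
definition "P1' (t::real) = 1737/64 - 159/2*t + 216*t^2 - 288*t^3 + 120*t^4"
definition "F1 t = P1 t/(DD (-1/2) t)^2 + 32* sqrt 3*arctan((4*t-1)/sqrt 3)"

lemma key1:
  "P1' t*DD (-1/2) t - 2*P1 t*DD' t - 24*(t-3/2)*(DD (-1/2) t)^2
   = WW (-1/2)*(49*TT t*(4*WW (-1/2)+2*TT t) + (WW (-1/2)+2*TT t)*DD (-1/2) t)"
  unfolding WW_def TT_def DD_def DD'_def P1_def P1'_def by algebra

lemma combine1:
  fixes P P' D D' Q tm :: real
  assumes "D \<noteq> 0" "Q \<noteq> 0" "D = -tm*Q"
  shows "(P'*D - 2*P*D' - 24*tm*D^2) / D^3 = (P' * D^2 - P * (2*D*D'))/(D^2)^2 + 24 / Q"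
proof -
  have e1: "(P' * D^2 - P * (2*D*D'))/(D^2)^2 = (P'*D - 2*P*D')/D^3"
  proof -
    have "(P' * D^2 - P * (2*D*D')) = D * (P'*D - 2*P*D')" by (simp add: algebra_simps power2_eq_square)
    moreover have "(D^2)^2 = D * D^3" by (simp add: power2_eq_square power3_eq_cube)
    ultimately show ?thesis using assms(1) by simp
  qed
  have e2: "24*tm*D^2 / D^3 = 24*tm/D" using assms(1) by (simp add: power2_eq_square power3_eq_cube)
  have e3: "24*tm/D = - (24/Q)" using assms by (simp add: field_simps)
  have "(P'*D - 2*P*D' - 24*tm*D^2) / D^3 = (P'*D - 2*P*D')/D^3 - 24*tm*D^2 / D^3"
    by (simp add: diff_divide_distrib)
  then show ?thesis unfolding e1 e2 e3 by simp
qed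

lemma part1:
  "((\<lambda>k::nat. (49 * real k + 1) * 8^k / (3^k * real ((3*k) choose k))) sums (81 + 16 * sqrt 3 * pi))"
proof -
  have W: "WW (-1/2) = 3/8" by (simp add: WW_def power2_eq_square)
  have W': "WW (-(1/2)) = 3/8" by (simp add: WW_def power2_eq_square)
  have x: "\<bar>1/WW (-1/2)\<bar> * 4/27 < 1" unfolding W by simp
  have s3: "sqrt 3 > 0" by simp
  have deriv: "(F1 has_real_derivative gam 49 1 ((1/WW (-1/2)) * (t*(1-t)^2))) (at t within {0..1})"
    if t: "t \<in> {0..1}" for t
  proof -
    have Tb: "0 \<le> TT t \<and> TT t \<le> 4/27" using T_bound[OF t] by (simp add: TT_def)
    have D0: "DD (-1/2) t \<noteq> 0" unfolding DD_def W using Tb by auto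
    have tm: "t - 3/2 \<noteq> 0" using t by auto
    have Qp: "QQ (-1/2) t > 0"
    proof -
      have "4 * QQ (-1/2) t = (2*t - 1/2)^2 + 3/4" unfolding QQ_def by (simp add: algebra_simps power2_eq_square)
      moreover have "(2*t - 1/2)^2 \<ge> 0" by simp
      ultimately show ?thesis by linarith
    qed
    have dP: "(P1 has_real_derivative P1' t) (at t)"
      unfolding P1_def P1'_def by (auto intro!: derivative_eq_intros simp: algebra_simps)
    have dD: "(DD (-1/2) has_real_derivative DD' t) (at t)"
      unfolding DD_def DD'_def TT_def by (auto intro!: derivative_eq_intros simp: algebra_simps power2_eq_square)
    have h1: "((\<lambda>t. P1 t/(DD (-1/2) t)^2) has_real_derivative (P1' t * (DD (-1/2) t)^2 - P1 t * (2*DD (-1/2) t*DD' t))/((DD (-1/2) t)^2)^2) (at t)"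
      using DERIV_divide[OF dP DERIV_power[OF dD, of 2]] D0
      by (simp add: power2_eq_square mult_ac)
    have dl0: "((\<lambda>t. 4*t-1) has_real_derivative 4) (at t)"
      by (auto intro!: derivative_eq_intros)
    have dl: "((\<lambda>t. (4*t-1)/sqrt 3) has_real_derivative 4/sqrt 3) (at t)"
      by (rule DERIV_cdivide[OF dl0])
    have h2: "((\<lambda>t. arctan((4*t-1)/sqrt 3)) has_real_derivative inverse (1 + ((4*t-1)/sqrt 3)^2) * (4/sqrt 3)) (at t)"
      by (rule DERIV_chain2[OF DERIV_arctan dl])
    have ar: "32* sqrt 3 * (inverse (1 + ((4*t-1)/sqrt 3)^2) * (4/sqrt 3)) = 24 / QQ (-1/2) t"
    proof -
      have zz: "1 + ((4*t-1)/sqrt 3)^2 = 16 * QQ (-1/2) t / 3"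
        unfolding QQ_def by (simp add: power_divide field_simps power2_eq_square)
      have gz: "32* sqrt 3 * (inverse z * (4/sqrt 3)) = 128 * inverse z" for z :: real
        using s3 by (simp add: field_simps)
      have "128 * inverse (16 * QQ (-1/2) t / 3) = 24 / QQ (-1/2) t" using Qp by (simp add: field_simps)
      then show ?thesis unfolding gz zz .
    qed
    have "(F1 has_real_derivative ((P1' t * (DD (-1/2) t)^2 - P1 t * (2*DD (-1/2) t*DD' t))/((DD (-1/2) t)^2)^2
        + 32* sqrt 3 * (inverse (1 + ((4*t-1)/sqrt 3)^2) * (4/sqrt 3)))) (at t)"
      unfolding F1_def by (rule DERIV_add[OF h1 DERIV_cmult[OF h2]])
    moreover have "(P1' t * (DD (-1/2) t)^2 - P1 t * (2*DD (-1/2) t*DD' t))/((DD (-1/2) t)^2)^2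
        + 32* sqrt 3 * (inverse (1 + ((4*t-1)/sqrt 3)^2) * (4/sqrt 3)) = gam 49 1 ((1/WW (-1/2)) * TT t)"
    proof -
      let ?D = "DD (-1/2) t" and ?W = "WW (-1/2)" and ?T = "TT t" and ?Q = "QQ (-1/2) t"
      have DW: "?D = ?W - ?T" by (simp add: DD_def)
      have DQ1: "?D = -(t-3/2) * ?Q" using DQ[of "-1/2" t] by simp
      have W0: "?W \<noteq> 0" using W by simp
      have e1: "1 - (1/?W)*?T = ?D/?W" using W0 DW by (simp add: field_simps)
      have "gam 49 1 ((1/?W) * ?T) = ?W*(49*?T*(4*?W+2*?T) + (?W+2*?T)*?D) / ?D^3"
        unfolding gam_def e1 using D0 W0 by (simp add: field_simps power2_eq_square power3_eq_cube)
      also have "\<dots> = (P1' t*?D - 2*P1 t*DD' t - 24*(t-3/2)*?D^2) / ?D^3" unfolding key1 ..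
      also have "\<dots> = (P1' t * ?D^2 - P1 t * (2*?D*DD' t))/(?D^2)^2 + 24 / ?Q"
        using combine1[OF D0 _ DQ1] Qp by simp
      finally show ?thesis unfolding ar by simp
    qed
    ultimately show ?thesis by (simp add: TT_def has_field_derivative_at_within)
  qed
  have S: "(\<lambda>k. (49 * real k + 1) * (1/WW (-1/2))^k / real((3*k) choose k)) sums (F1 1 - F1 0)"
    by (rule main_sum[OF x deriv])
  have fe: "(\<lambda>k. (49 * real k + 1) * (1/WW (-1/2))^k / real((3*k) choose k))
      = (\<lambda>k::nat. (49 * real k + 1) * 8^k / (3^k * real ((3*k) choose k)))"
    by (rule ext) (simp add: W' power_divide)
  have a1: "arctan (sqrt 3) = pi/3"
    using arctan_tan[of "pi/3"] tan_60 by simp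
  have a0: "arctan (-1/sqrt 3) = - (pi/6)"
    using arctan_tan[of "pi/6"] tan_30 arctan_minus[of "1/sqrt 3"] by simp
  have q: "(4*1-1)/sqrt 3 = sqrt (3::real)" using real_div_sqrt[of 3] by simp
  have v: "P1 1 = 243/64" "P1 0 = -243/32" by (simp_all add: P1_def)
  have d: "DD (-1/2) 1 = 3/8" "DD (-1/2) 0 = 3/8" by (simp_all add: DD_def TT_def W W')
  have q0: "(4*0-1)/sqrt 3 = -1/sqrt (3::real)" by simp
  have "F1 1 - F1 0 = (243/64)/(3/8)^2 - (-243/32)/(3/8)^2 + 32 * sqrt 3 * (pi/3 - (- (pi/6)))"
    unfolding F1_def v d q q0 a1 a0 by (simp add: algebra_simps)
  also have "\<dots> = 81 + 16 * sqrt 3 * pi" by (simp add: field_simps power2_eq_square)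
  finally have "F1 1 - F1 0 = 81 + 16 * sqrt 3 * pi" .
  then show ?thesis using S fe by simp
qed

lemma cconst_half: "1/cconst < 2"
proof -
  have cf: "0 < cconst" "4*cconst^3 + 27*cconst = 27" using cconst_facts by auto
  have "cconst > 1/2"
  proof (rule ccontr)
    assume "\<not> cconst > 1/2"
    then have "cconst^3 \<le> (1/2)^3" using cf by (intro power_mono) auto
    then have "cconst^3 \<le> 1/8" by (simp add: power_divide)
    then show False using cf \<open>\<not> cconst > 1/2\<close> by linarith
  qed
  then show ?thesis using cf by (simp add: field_simps)
qed

lemma cor:
  fixes n f A B q V :: real
  assumes "n < -1/3 \<or> n > 1/cconst" "a_coef n = f*A" "b_coef n = f*B" "(1-n)*n^2 = q" "f \<noteq> 0"
    "(3 * n^2 * (n - 1) * (4 * ln (1 - 1/n) - 9 * (3*n^2 - 6*n + 1)))/f = V"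
  shows "(\<lambda>k::nat. (A * real k - B) / (q^k * real ((3*k) choose k))) sums V"
proof -
  have "(\<lambda>k::nat. (a_coef n * real k - b_coef n) / (((1 - n) * n^2)^k * real ((3*k) choose k)) / f)
     sums ((3 * n^2 * (n - 1) * (4 * ln (1 - 1/n) - 9 * (3*n^2 - 6*n + 1)))/f)"
    by (rule sums_divide[OF part2[OF assms(1)]])
  moreover have "(\<lambda>k::nat. (a_coef n * real k - b_coef n) / (((1 - n) * n^2)^k * real ((3*k) choose k)) / f)
     = (\<lambda>k::nat. (A * real k - B) / (q^k * real ((3*k) choose k)))"
  proof (rule ext)
    fix k :: nat
    have h: "(f*Z)/Y/f = Z/Y" for Z Y :: real using assms(5) by (cases "Y = 0") (simp_all add: field_simps)
    have eq: "f * A * real k - f * B = f * (A * real k - B)" by (simp add: algebra_simps)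
    show "(a_coef n * real k - b_coef n) / (((1 - n) * n^2)^k * real ((3*k) choose k)) / f
      = (A * real k - B) / (q^k * real ((3*k) choose k))"
      unfolding assms(2,3,4) eq by (rule h)
  qed
  ultimately show ?thesis using assms(6) by simp
qed

lemma ln_half: "ln (1/2::real) = - ln 2" by (simp add: ln_div)

lemma cors:
  shows "((\<lambda>k::nat. (275 * real k - 158) / (2^k * real ((3*k) choose k)))
          sums (6 * ln 2 - 135))"
    "((\<lambda>k::nat. (728 * real k - 17) / ((-4)^k * real ((3*k) choose k)))
          sums (-54 - 24 * ln 2))"
    "((\<lambda>k::nat. (5635 * real k - 1156) / ((-18)^k * real ((3*k) choose k)))
          sums (54 * ln (2/3) - 1215))"
    "((\<lambda>k::nat. (63050 * real k - 15959) / ((-48)^k * real ((3*k) choose k)))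
          sums (72 * (4 * ln (3/4) - 225)))"
    "((\<lambda>k::nat. (112216 * real k - 30847) / ((-100)^k * real ((3*k) choose k)))
          sums (300 * ln (4/5) - 31050))"
    "((\<lambda>k::nat. (615296 * real k - 176777) / ((-180)^k * real ((3*k) choose k)))
          sums (270 * (4 * ln (5/6) - 657)))"
    "((\<lambda>k::nat. (710809 * real k - 209926) / ((-294)^k * real ((3*k) choose k)))
          sums (441 * (2 * ln (6/7) - 477)))"
    "((\<lambda>k::nat. (2910050 * real k - 875807) / ((-448)^k * real ((3*k) choose k)))
          sums (672 * (4 * ln (7/8) - 1305)))"
    "((\<lambda>k::nat. (2721250 * real k - 830317) / ((-648)^k * real ((3*k) choose k)))
          sums (972 * (2 * ln (8/9) - 855)))"
    "((\<lambda>k::nat. (9490712 * real k - 2926289) / ((-900)^k * real ((3*k) choose k)))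
          sums (1350 * (4 * ln (9/10) - 2169)))"
    "((\<lambda>k::nat. (7825423 * real k - 2432776) / ((-1210)^k * real ((3*k) choose k)))
          sums (1815 * (2 * ln (10/11) - 1341)))"
proof -
  have c: "n \<ge> 2 \<Longrightarrow> n > 1/cconst" for n :: real using cconst_half by linarith
  show "((\<lambda>k::nat. (275 * real k - 158) / (2^k * real ((3*k) choose k))) sums (6 * ln 2 - 135))"
    by (rule cor[where n="-1" and f="-4"]) (simp_all add: a_coef_def b_coef_def field_simps)
  show "((\<lambda>k::nat. (728 * real k - 17) / ((-4)^k * real ((3*k) choose k))) sums (-54 - 24 * ln 2))"
    by (rule cor[where n="2" and f="2"]) (simp_all add: a_coef_def b_coef_def c ln_half)
  show "((\<lambda>k::nat. (5635 * real k - 1156) / ((-18)^k * real ((3*k) choose k))) sums (54 * ln (2/3) - 1215))"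
    by (rule cor[where n="3" and f="4"]) (simp_all add: a_coef_def b_coef_def c)
  show "((\<lambda>k::nat. (63050 * real k - 15959) / ((-48)^k * real ((3*k) choose k))) sums (72 * (4 * ln (3/4) - 225)))"
    by (rule cor[where n="4" and f="2"]) (simp_all add: a_coef_def b_coef_def c)
  show "((\<lambda>k::nat. (112216 * real k - 30847) / ((-100)^k * real ((3*k) choose k))) sums (300 * ln (4/5) - 31050))"
    by (rule cor[where n="5" and f="4"]) (simp_all add: a_coef_def b_coef_def c)
  show "((\<lambda>k::nat. (615296 * real k - 176777) / ((-180)^k * real ((3*k) choose k))) sums (270 * (4 * ln (5/6) - 657)))"
    by (rule cor[where n="6" and f="2"]) (simp_all add: a_coef_def b_coef_def c)
  show "((\<lambda>k::nat. (710809 * real k - 209926) / ((-294)^k * real ((3*k) choose k))) sums (441 * (2 * ln (6/7) - 477)))"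
    by (rule cor[where n="7" and f="4"]) (simp_all add: a_coef_def b_coef_def c)
  show "((\<lambda>k::nat. (2910050 * real k - 875807) / ((-448)^k * real ((3*k) choose k))) sums (672 * (4 * ln (7/8) - 1305)))"
    by (rule cor[where n="8" and f="2"]) (simp_all add: a_coef_def b_coef_def c)
  show "((\<lambda>k::nat. (2721250 * real k - 830317) / ((-648)^k * real ((3*k) choose k))) sums (972 * (2 * ln (8/9) - 855)))"
    by (rule cor[where n="9" and f="4"]) (simp_all add: a_coef_def b_coef_def c)
  show "((\<lambda>k::nat. (9490712 * real k - 2926289) / ((-900)^k * real ((3*k) choose k))) sums (1350 * (4 * ln (9/10) - 2169)))"
    by (rule cor[where n="10" and f="2"]) (simp_all add: a_coef_def b_coef_def c)
  show "((\<lambda>k::nat. (7825423 * real k - 2432776) / ((-1210)^k * real ((3*k) choose k))) sums (1815 * (2 * ln (10/11) - 1341)))"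
    by (rule cor[where n="11" and f="4"]) (simp_all add: a_coef_def b_coef_def c)
qed

lemma cor8:
  "((\<lambda>k::nat. (1813 * real k - 2707) * 8^k / (3^k * real ((3*k) choose k))) sums (9 * (16 * ln 3 - 171)))"
proof -
  have "((\<lambda>k::nat. (1813 * real k - 2707) / ((3/8)^k * real ((3*k) choose k))) sums (9 * (16 * ln 3 - 171)))"
    by (rule cor[where n="-1/2" and f="-1/32"]) (simp_all add: a_coef_def b_coef_def power_divide algebra_simps)
  moreover have "(\<lambda>k::nat. (1813 * real k - 2707) / ((3/8)^k * real ((3*k) choose k)))
     = (\<lambda>k::nat. (1813 * real k - 2707) * 8^k / (3^k * real ((3*k) choose k)))"
    by (rule ext) (simp add: power_divide)
  ultimately show ?thesis by simp
qed


theorem corollary1p1: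
  shows "((\<lambda>k::nat. (49 * real k + 1) * 8^k / (3^k * real ((3*k) choose k)))
            sums (81 + 16 * sqrt 3 * pi))
    \<and> (\<forall>n::real. (n < -1/3 \<or> n > 1 / cconst) \<longrightarrow>
        ((\<lambda>k::nat. (a_coef n * real k - b_coef n) / (((1 - n) * n^2)^k * real ((3*k) choose k)))
          sums (3 * n^2 * (n - 1) * (4 * ln (1 - 1/n) - 9 * (3*n^2 - 6*n + 1)))))
    \<and> ((\<lambda>k::nat. (275 * real k - 158) / (2^k * real ((3*k) choose k)))
          sums (6 * ln 2 - 135))
    \<and> ((\<lambda>k::nat. (728 * real k - 17) / ((-4)^k * real ((3*k) choose k)))
          sums (-54 - 24 * ln 2))
    \<and> ((\<lambda>k::nat. (1813 * real k - 2707) * 8^k / (3^k * real ((3*k) choose k)))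
          sums (9 * (16 * ln 3 - 171)))
    \<and> ((\<lambda>k::nat. (5635 * real k - 1156) / ((-18)^k * real ((3*k) choose k)))
          sums (54 * ln (2/3) - 1215))
    \<and> ((\<lambda>k::nat. (63050 * real k - 15959) / ((-48)^k * real ((3*k) choose k)))
          sums (72 * (4 * ln (3/4) - 225)))
    \<and> ((\<lambda>k::nat. (112216 * real k - 30847) / ((-100)^k * real ((3*k) choose k)))
          sums (300 * ln (4/5) - 31050))
    \<and> ((\<lambda>k::nat. (615296 * real k - 176777) / ((-180)^k * real ((3*k) choose k)))
          sums (270 * (4 * ln (5/6) - 657)))
    \<and> ((\<lambda>k::nat. (710809 * real k - 209926) / ((-294)^k * real ((3*k) choose k)))
          sums (441 * (2 * ln (6/7) - 477)))
    \<and> ((\<lambda>k::nat. (2910050 * real k - 875807) / ((-448)^k * real ((3*k) choose k)))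
          sums (672 * (4 * ln (7/8) - 1305)))
    \<and> ((\<lambda>k::nat. (2721250 * real k - 830317) / ((-648)^k * real ((3*k) choose k)))
          sums (972 * (2 * ln (8/9) - 855)))
    \<and> ((\<lambda>k::nat. (9490712 * real k - 2926289) / ((-900)^k * real ((3*k) choose k)))
          sums (1350 * (4 * ln (9/10) - 2169)))
    \<and> ((\<lambda>k::nat. (7825423 * real k - 2432776) / ((-1210)^k * real ((3*k) choose k)))
          sums (1815 * (2 * ln (10/11) - 1341)))"
    using part1 part2 cors cor8 by blast

end
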